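(* Let $\Gamma$ be a weighted digraph with vertex set $\{1,\dots,n\}$, $n>1$, without loops and with strictly positive arc weights, let $L$ be its Laplacian matrix, $d$ its in-forest dimension, and $Q_k$ its matrices of in-forests with $k$ arcs. Then for every $\lambda\in\mathbb{C}$, $$\operatorname{adj}(\lambda I+L)=\sum_{k=0}^{n-d} Q_k\,\lambda^{\,n-k-1},$$ where $\lambda^0:=1$ (also for $\lambda=0$) and $\operatorname{adj}A$ denotes the transposed matrix of cofactors of $A$.
   Context: $W=(w_{ij})$ is the matrix of arc weights: $w_{ij}>0$ if there is an arc from $i$ to $j$, and $w_{ij}=0$ otherwise. The Laplacian matrix $L=(\ell_{ij})$ has $\ell_{ij}=-w_{ij}$ for $j\neq i$ and $\ell_{ii}=\sum_{k\neq i}w_{ik}$. The weight of a subgraph is the product of the weights of its arcs (1 if it has no arcs); the weight of a set of subgraphs is the sum of their weights (0 for the empty set). A converging tree is a weakly connected digraph in which one vertex (the root) has outdegree 0 and all others have outdegree 1. An in-forest of $\Gamma$ is a spanning subgraph of $\Gamma$ all of whose weak components are converging trees. The in-forest dimension $d$ is the minimum number of trees in an in-forest of $\Gamma$; the maximum number of arcs of an in-forest is $n-d$. For $k\ge0$, $Q_k=(q^k_{ij})$ is the $n\times n$ matrix where $q^k_{ij}$ is the total weight of the in-forests of $\Gamma$ with $k$ arcs in which $i$ belongs to a tree whose root is $j$; thus $Q_0=I$ and $Q_k=0$ for $k>n-d$. *)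

theory Defs
  imports "Jordan_Normal_Form.Determinant" "HOL-Library.Complex_Order" Complex_Main
begin

definition arcs :: "nat \<Rightarrow> (nat \<Rightarrow> nat \<Rightarrow> real) \<Rightarrow> (nat \<times> nat) set" where
  "arcs n w = {(i,j). i < n \<and> j < n \<and> w i j > 0}"

definition outdeg :: "(nat \<times> nat) set \<Rightarrow> nat \<Rightarrow> nat" where
  "outdeg A v = card {u. (v,u) \<in> A}"

definition wrel :: "nat \<Rightarrow> (nat \<times> nat) set \<Rightarrow> (nat \<times> nat) set" where
  "wrel n F = {(x,y). x < n \<and> y < n \<and> (x,y) \<in> (F \<union> F\<inverse>)\<^sup>*}"

definition converging_tree :: "nat set \<Rightarrow> (nat \<times> nat) set \<Rightarrow> bool" where
  "converging_tree V A \<longleftrightarrow> A \<subseteq> V \<times> V \<and> V \<noteq> {} \<and>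
     (\<forall>x\<in>V. \<forall>y\<in>V. (x,y) \<in> (A \<union> A\<inverse>)\<^sup>*) \<and>
     (\<exists>r\<in>V. outdeg A r = 0 \<and> (\<forall>v\<in>V. v \<noteq> r \<longrightarrow> outdeg A v = 1))"

definition in_forest :: "nat \<Rightarrow> (nat \<Rightarrow> nat \<Rightarrow> real) \<Rightarrow> (nat \<times> nat) set \<Rightarrow> bool" where
  "in_forest n w F \<longleftrightarrow> F \<subseteq> arcs n w \<and>
     (\<forall>C \<in> {0..<n} // wrel n F. converging_tree C (F \<inter> (C \<times> C)))"

definition num_trees :: "nat \<Rightarrow> (nat \<times> nat) set \<Rightarrow> nat" where
  "num_trees n F = card ({0..<n} // wrel n F)"

definition in_forest_dim :: "nat \<Rightarrow> (nat \<Rightarrow> nat \<Rightarrow> real) \<Rightarrow> nat" where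
  "in_forest_dim n w = Min {num_trees n F | F. in_forest n w F}"

definition weight :: "(nat \<Rightarrow> nat \<Rightarrow> real) \<Rightarrow> (nat \<times> nat) set \<Rightarrow> real" where
  "weight w F = (\<Prod>(i,j)\<in>F. w i j)"

(* entry (i,j) of Q_k: total weight of in-forests with k arcs in which i belongs to a tree rooted at j *)
definition Qent :: "nat \<Rightarrow> (nat \<Rightarrow> nat \<Rightarrow> real) \<Rightarrow> nat \<Rightarrow> nat \<Rightarrow> nat \<Rightarrow> real" where
  "Qent n w k i j = (\<Sum>F \<in> {F. in_forest n w F \<and> card F = k \<and> (i,j) \<in> wrel n F \<and> outdeg F j = 0}. weight w F)"

definition Qmat :: "nat \<Rightarrow> (nat \<Rightarrow> nat \<Rightarrow> real) \<Rightarrow> nat \<Rightarrow> real mat" where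
  "Qmat n w k = mat n n (\<lambda>(i,j). Qent n w k i j)"

definition laplacian :: "nat \<Rightarrow> (nat \<Rightarrow> nat \<Rightarrow> real) \<Rightarrow> real mat" where
  "laplacian n w = mat n n (\<lambda>(i,j). if i = j then (\<Sum>k\<in>{0..<n} - {i}. w i k) else - w i j)"

end

theory Submission
  imports Defs "HOL-Library.FuncSet"
begin


lemma det_expand:
  fixes a :: "nat \<Rightarrow> nat \<Rightarrow> 'a::comm_ring_1" and v :: "nat \<Rightarrow> nat \<Rightarrow> nat \<Rightarrow> 'a"
  assumes fin: "\<And>k. finite (S k)"
  shows "det (mat n n (\<lambda>(k,c). \<Sum>m\<in>S k. a k m * v k m c)) =
    (\<Sum>f\<in>PiE {0..<n} S. (\<Prod>k=0..<n. a k (f k)) * det (mat n n (\<lambda>(k,c). v k (f k) c)))"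
proof -
  have "det (mat n n (\<lambda>(k,c). \<Sum>m\<in>S k. a k m * v k m c)) =
     (\<Sum>p\<in>{p. p permutes {0..<n}}. signof p * (\<Prod>k=0..<n. \<Sum>m\<in>S k. a k m * v k m (p k)))"
    by (subst det_def'[of _ n]) (auto intro!: sum.cong prod.cong simp: permutes_def)
  also have "\<dots> = (\<Sum>p\<in>{p. p permutes {0..<n}}. signof p *
      (\<Sum>f\<in>PiE {0..<n} S. (\<Prod>k=0..<n. a k (f k)) * (\<Prod>k=0..<n. v k (f k) (p k))))"
    by (subst prod_sum_PiE) (auto simp: fin prod.distrib)
  also have "\<dots> = (\<Sum>f\<in>PiE {0..<n} S. (\<Prod>k=0..<n. a k (f k)) *
      (\<Sum>p\<in>{p. p permutes {0..<n}}. signof p * (\<Prod>k=0..<n. v k (f k) (p k))))"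
    unfolding sum_distrib_left by (subst sum.swap) (simp add: mult_ac)
  also have "\<dots> = (\<Sum>f\<in>PiE {0..<n} S. (\<Prod>k=0..<n. a k (f k)) * det (mat n n (\<lambda>(k,c). v k (f k) c)))"
  proof (rule sum.cong[OF refl])
    fix f assume "f \<in> PiE {0..<n} S"
    have "det (mat n n (\<lambda>(k,c). v k (f k) c)) =
      (\<Sum>p\<in>{p. p permutes {0..<n}}. signof p * (\<Prod>k=0..<n. v k (f k) (p k)))"
      by (subst det_def'[of _ n]) (auto intro!: sum.cong prod.cong simp: permutes_def)
    then show "(\<Prod>k=0..<n. a k (f k)) *
      (\<Sum>p\<in>{p. p permutes {0..<n}}. signof p * (\<Prod>k=0..<n. v k (f k) (p k))) =
      (\<Prod>k=0..<n. a k (f k)) * det (mat n n (\<lambda>(k,c). v k (f k) c))" by simp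
  qed
  finally show ?thesis .
qed



definition reaches :: "(nat \<Rightarrow> nat) \<Rightarrow> nat \<Rightarrow> nat \<Rightarrow> bool" where
  "reaches f x r \<longleftrightarrow> f r = r \<and> (\<exists>t. (f^^t) x = r)"

definition acyc :: "nat \<Rightarrow> (nat \<Rightarrow> nat) \<Rightarrow> bool" where
  "acyc n f \<longleftrightarrow> (\<forall>x<n. \<exists>r. reaches f x r)"

definition froot :: "(nat \<Rightarrow> nat) \<Rightarrow> nat \<Rightarrow> nat" where
  "froot f x = (THE r. reaches f x r)"

lemma funpow_fix: "f r = r \<Longrightarrow> (f^^t) r = r"
  by (induction t) auto

lemma reaches_unique: assumes "reaches f x r1" "reaches f x r2" shows "r1 = r2"
proof -
  obtain t1 t2 where t: "(f^^t1) x = r1" "(f^^t2) x = r2" "f r1 = r1" "f r2 = r2"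
    using assms unfolding reaches_def by auto
  show ?thesis
  proof (cases "t1 \<le> t2")
    case True
    then have "(f^^t2) x = (f^^(t2-t1)) ((f^^t1) x)"
      by (metis funpow_add le_add_diff_inverse2 o_apply)
    then show ?thesis using t funpow_fix[of f r1] by simp
  next
    case False
    then have "(f^^t1) x = (f^^(t1-t2)) ((f^^t2) x)"
      by (metis funpow_add le_add_diff_inverse2 o_apply nat_le_linear)
    then show ?thesis using t funpow_fix[of f r2] by simp
  qed
qed

lemma froot_eq: "reaches f x r \<Longrightarrow> froot f x = r"
  unfolding froot_def using reaches_unique by blast

lemma reaches_step: assumes "reaches f x r" shows "reaches f (f x) r"
proof -
  obtain t where t: "(f^^t) x = r" "f r = r" using assms unfolding reaches_def by auto
  show ?thesis
  proof (cases t)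
    case 0 then show ?thesis using t unfolding reaches_def by (metis funpow_0)
  next
    case (Suc s) then show ?thesis using t unfolding reaches_def
      by (metis funpow_Suc_right o_apply)
  qed
qed

lemma reaches_back: assumes "reaches f (f x) r" shows "reaches f x r"
  using assms unfolding reaches_def by (metis funpow_Suc_right o_apply)

lemma reaches_fix: "f r = r \<Longrightarrow> reaches f r r"
  unfolding reaches_def by (metis funpow_0)

lemma reaches_upd_aux: "f r = r \<Longrightarrow> (f^^s) x = r \<Longrightarrow> \<exists>r'. reaches (f(k:=k)) x r'"
proof (induction s arbitrary: x)
  case 0
  then have "(f(k:=k)) x = x" by auto
  then show ?case using reaches_fix by blast
next
  case (Suc s x)
  show ?case
  proof (cases "x = k")
    case True
    then have "(f(k:=k)) x = x" by simp
    then show ?thesis using reaches_fix by blast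
  next
    case False
    have "(f^^s) (f x) = r" using Suc.prems by (metis funpow_Suc_right o_apply)
    then obtain r' where "reaches (f(k:=k)) (f x) r'" using Suc.IH Suc.prems by blast
    then have "reaches (f(k:=k)) ((f(k:=k)) x) r'" using False by simp
    then show ?thesis using reaches_back by blast
  qed
qed

lemma reaches_upd: assumes "reaches f x r" shows "\<exists>r'. reaches (f(k:=k)) x r'"
  using assms reaches_upd_aux unfolding reaches_def by blast

lemma exists_last: assumes "(f^^t) x = r" "f r = r" "f x \<noteq> x" "x < n" "\<forall>k<n. f k < n"
  shows "\<exists>k<n. f k \<noteq> k \<and> f (f k) = f k"
  using assms
proof (induction t arbitrary: x)
  case 0 then show ?case by simp
next
  case (Suc t x)
  show ?case
  proof (cases "f (f x) = f x")
    case True then show ?thesis using Suc.prems by blast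
  next
    case False
    have "(f^^t) (f x) = r" using Suc.prems by (metis funpow_Suc_right o_apply)
    then show ?thesis using Suc.IH[of "f x"] False Suc.prems by blast
  qed
qed

definition Vstd :: "nat \<Rightarrow> (nat \<Rightarrow> nat) \<Rightarrow> complex mat" where
  "Vstd n f = mat n n (\<lambda>(k,c). (if c = k then 1 else 0) - (if f k \<noteq> k \<and> c = f k then 1 else 0))"

definition Vm :: "nat \<Rightarrow> (nat \<Rightarrow> nat) \<Rightarrow> nat \<Rightarrow> nat \<Rightarrow> complex mat" where
  "Vm n f j x = mat n n (\<lambda>(k,c). if k = j then (if c = x then 1 else 0) else
     (if c = k then 1 else 0) - (if f k \<noteq> k \<and> c = f k then 1 else 0))"

lemma det_Vstd_aux:
  "card {k\<in>{0..<n}. f k \<noteq> k} = m \<Longrightarrow> acyc n f \<Longrightarrow> \<forall>k<n. f k < n \<Longrightarrow> det (Vstd n f) = 1"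
proof (induction m arbitrary: f)
  case 0
  then have "\<forall>k<n. f k = k" by auto
  then have "Vstd n f = 1\<^sub>m n" unfolding Vstd_def by (auto intro!: eq_matI)
  then show ?case by simp
next
  case (Suc m f)
  have "{k\<in>{0..<n}. f k \<noteq> k} \<noteq> {}" using Suc.prems(1) by (metis card.empty nat.distinct(1))
  then obtain x where x: "x < n" "f x \<noteq> x" by auto
  obtain r where "reaches f x r" using Suc.prems x unfolding acyc_def by auto
  then obtain t where t: "(f^^t) x = r" "f r = r" unfolding reaches_def by auto
  obtain k where k: "k < n" "f k \<noteq> k" "f (f k) = f k"
    using exists_last[OF t(1) t(2) x(2) x(1)] Suc.prems(3) by blast
  define g where "g = f(k:=k)"
  have "{k\<in>{0..<n}. g k \<noteq> k} = {k\<in>{0..<n}. f k \<noteq> k} - {k}" unfolding g_def by auto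
  then have cg: "card {k\<in>{0..<n}. g k \<noteq> k} = m" using Suc.prems k by simp
  have ag: "acyc n g" using Suc.prems reaches_upd unfolding acyc_def g_def by blast
  have clg: "\<forall>k<n. g k < n" using Suc.prems k unfolding g_def by auto
  have dg: "det (Vstd n g) = 1" using Suc.IH[OF cg ag clg] .
  have fk: "f k < n" using Suc.prems k by auto
  have "Vstd n f = addrow (-1) k (f k) (Vstd n g)"
    unfolding Vstd_def mat_addrow_def g_def using k fk by (auto intro!: eq_matI)
  also have "det \<dots> = det (Vstd n g)"
    by (rule det_addrow[OF fk]) (use k in \<open>auto simp: Vstd_def\<close>)
  finally show ?case using dg by simp
qed

lemma det_Vstd: "acyc n f \<Longrightarrow> \<forall>k<n. f k < n \<Longrightarrow> det (Vstd n f) = 1"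
  using det_Vstd_aux by blast

lemma det_Vm_reduce:
  assumes "f j = j" "j < n" "\<forall>k<n. f k < n" "f r = r"
  shows "(f^^t) x = r \<Longrightarrow> x < n \<Longrightarrow> det (Vm n f j x) = det (Vm n f j r)"
proof (induction t arbitrary: x)
  case 0 then show ?case by simp
next
  case (Suc t x)
  show ?case
  proof (cases "f x = x")
    case True
    then have "(f^^Suc t) x = x" using funpow_fix by (metis funpow_Suc_right o_apply)
    then show ?thesis using Suc.prems by simp
  next
    case False
    then have xj: "x \<noteq> j" using assms by auto
    have fx: "f x < n" using assms Suc.prems by auto
    have "(f^^t) (f x) = r" using Suc.prems by (metis funpow_Suc_right o_apply)
    then have ih: "det (Vm n f j (f x)) = det (Vm n f j r)" using Suc.IH fx by blast
    have "Vm n f j x = addrow 1 j x (Vm n f j (f x))"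
      unfolding Vm_def mat_addrow_def using False xj Suc.prems fx by (auto intro!: eq_matI)
    also have "det \<dots> = det (Vm n f j (f x))"
      by (rule det_addrow[OF Suc.prems(2)]) (use xj in \<open>auto simp: Vm_def\<close>)
    finally show ?thesis using ih by simp
  qed
qed

lemma det_Vm_acyc:
  assumes "f j = j" "j < n" "i < n" "\<forall>k<n. f k < n" "acyc n f"
  shows "det (Vm n f j i) = (if froot f i = j then 1 else 0)"
proof -
  obtain r where r: "reaches f i r" using assms unfolding acyc_def by auto
  then have rr: "froot f i = r" by (rule froot_eq)
  obtain t where t: "(f^^t) i = r" "f r = r" using r unfolding reaches_def by auto
  have rn: "r < n"
  proof -
    have "\<And>t. (f^^t) i < n" 
    proof -
      fix t show "(f^^t) i < n" by (induction t) (use assms in auto)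
    qed
    then show ?thesis using t by auto
  qed
  have red: "det (Vm n f j i) = det (Vm n f j r)"
    using det_Vm_reduce[OF assms(1,2,4) t(2) t(1) assms(3)] .
  show ?thesis
  proof (cases "r = j")
    case True
    have "Vm n f j r = Vstd n f" unfolding Vm_def Vstd_def using True assms by (auto intro!: eq_matI)
    then show ?thesis using red det_Vstd[OF assms(5,4)] rr True by simp
  next
    case False
    have "det (Vm n f j r) = 0"
      by (rule det_identical_rows[of _ n j r]) (use False assms rn t in \<open>auto simp: Vm_def\<close>)
    then show ?thesis using red rr False by simp
  qed
qed

lemma funpow_period: "(f^^p) u = u \<Longrightarrow> (f^^(p*m)) u = u"
proof (induction m)
  case 0 then show ?case by simp
next
  case (Suc m)
  have "(f^^(p*Suc m)) u = (f^^p) ((f^^(p*m)) u)" by (simp add: funpow_add)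
  then show ?case using Suc by simp
qed

lemma det_Vm_cyc:
  assumes "f j = j" "\<forall>k<n. f k < n" "\<not> acyc n f"
  shows "det (Vm n f j x) = 0"
proof -
  obtain y where y: "y < n" "\<And>r. \<not> reaches f y r" using assms unfolding acyc_def by auto
  have ybd: "\<And>t. (f^^t) y < n"
  proof -
    fix t show "(f^^t) y < n" by (induction t) (use assms y in auto)
  qed
  have "\<not> inj_on (\<lambda>t. (f^^t) y) {0..n}"
  proof
    assume "inj_on (\<lambda>t. (f^^t) y) {0..n}"
    then have "card ((\<lambda>t. (f^^t) y) ` {0..n}) = n + 1" by (simp add: card_image)
    moreover have "(\<lambda>t. (f^^t) y) ` {0..n} \<subseteq> {0..<n}" using ybd by auto
    then have "card ((\<lambda>t. (f^^t) y) ` {0..n}) \<le> n" by (metis card_atLeastLessThan card_mono finite_atLeastLessThan diff_zero)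
    ultimately show False by simp
  qed
  then obtain a b where ab: "a < b" "(f^^a) y = (f^^b) y"
    unfolding inj_on_def by (metis nat_neq_iff)
  define z where "z = (f^^a) y"
  have zp: "(f^^(b-a)) z = z" unfolding z_def using ab
    by (metis funpow_add le_add_diff_inverse2 less_imp_le o_apply)
  have zf: "f z \<noteq> z" using y(2)[of z] unfolding reaches_def z_def by auto
  define D where "D = {u. u < n \<and> f u \<noteq> u \<and> (\<exists>p>0. (f^^p) u = u)}"
  have zn: "z < n" using ybd z_def by auto
  have ba: "b - a > 0" using ab by simp
  have zD: "z \<in> D" unfolding D_def using zp zf zn ba by blast
  have finD: "finite D" unfolding D_def by auto
  have DN: "{..<n} \<inter> D = D" unfolding D_def by auto
  have fD: "f ` D \<subseteq> D"
  proof
    fix v assume "v \<in> f ` D"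
    then obtain u p where u: "v = f u" "u < n" "f u \<noteq> u" "p > 0" "(f^^p) u = u" unfolding D_def by auto
    have "(f^^p) (f u) = f u" using funpow_swap1[of f p u] u(5) by simp
    moreover have "f (f u) \<noteq> f u"
    proof
      assume "f (f u) = f u"
      then have "(f^^(p-1)) (f u) = f u" by (rule funpow_fix)
      moreover obtain q where "p = Suc q" using u(4) gr0_implies_Suc by blast
      ultimately have "(f^^p) u = f u" by (simp del: funpow.simps add: funpow_Suc_right)
      then show False using u by simp
    qed
    ultimately show "v \<in> D" unfolding D_def using u assms by auto
  qed
  have injD: "inj_on f D"
  proof
    fix u1 u2 assume u: "u1 \<in> D" "u2 \<in> D" "f u1 = f u2"
    then obtain p1 p2 where p: "p1 > 0" "(f^^p1) u1 = u1" "p2 > 0" "(f^^p2) u2 = u2"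
      unfolding D_def by auto
    have "(f^^(p1*p2)) u1 = u1" using funpow_period[OF p(2)] by blast
    moreover have "(f^^(p1*p2)) u2 = u2" using funpow_period[OF p(4), of p1] by (simp add: mult.commute)
    moreover obtain q where "p1 * p2 = Suc q" using p gr0_implies_Suc by (metis nat_0_less_mult_iff)
    ultimately have "(f^^q) (f u1) = u1" "(f^^q) (f u2) = u2" by (simp_all del: funpow.simps add: funpow_Suc_right)
    then show "u1 = u2" using u(3) by metis
  qed
  have imD: "f ` D = D" using endo_inj_surj[OF finD fD injD] .
  define v where "v = vec n (\<lambda>u. if u \<in> D then (1::complex) else 0)"
  have Vc: "Vm n f j x \<in> carrier_mat n n" unfolding Vm_def by simp
  have jD: "j \<notin> D" unfolding D_def using assms by auto
  have "transpose_mat (Vm n f j x) *\<^sub>v v = 0\<^sub>v n"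
  proof (rule eq_vecI)
    fix c assume c: "c < dim_vec (0\<^sub>v n :: complex vec)"
    then have cn: "c < n" by simp
    have "(transpose_mat (Vm n f j x) *\<^sub>v v) $ c = (\<Sum>u<n. Vm n f j x $$ (u,c) * v $ u)"
      using cn unfolding Vm_def v_def by (auto simp: scalar_prod_def atLeast0LessThan intro!: sum.cong)
    also have "\<dots> = (\<Sum>u<n. (if u \<in> D then Vm n f j x $$ (u,c) else 0))"
      by (rule sum.cong) (auto simp: v_def)
    also have "\<dots> = (\<Sum>u\<in>{..<n} \<inter> D. Vm n f j x $$ (u,c))"
      by (simp add: sum.inter_restrict)
    also have "\<dots> = (\<Sum>u\<in>D. Vm n f j x $$ (u,c))"
      using DN by simp
    also have "\<dots> = (\<Sum>u\<in>D. (if c = u then 1 else 0) - (if c = f u then 1 else 0))"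
    proof (rule sum.cong[OF refl])
      fix u assume u: "u \<in> D"
      then have "u < n" "f u \<noteq> u" unfolding D_def by auto
      moreover have "u \<noteq> j" using u jD by auto
      ultimately show "Vm n f j x $$ (u,c) = (if c = u then 1 else 0) - (if c = f u then 1 else 0)"
        using cn unfolding Vm_def by auto
    qed
    also have "\<dots> = (\<Sum>u\<in>D. (if c = u then 1 else 0)) - (\<Sum>u\<in>D. (if c = f u then 1 else 0))"
      by (simp add: sum_subtractf)
    also have "(\<Sum>u\<in>D. (if c = f u then 1 else 0)) = (\<Sum>u\<in>f ` D. (if c = u then (1::complex) else 0))"
      by (simp add: sum.reindex[OF injD])
    finally show "(transpose_mat (Vm n f j x) *\<^sub>v v) $ c = 0\<^sub>v n $ c" using imD cn by simp
  qed (simp add: Vm_def)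
  moreover have "v \<noteq> 0\<^sub>v n"
  proof
    assume "v = 0\<^sub>v n"
    then have "v $ z = 0" using zD by (simp add: D_def)
    then show False using zD unfolding v_def D_def by auto
  qed
  moreover have "v \<in> carrier_vec n" unfolding v_def by simp
  ultimately have "det (transpose_mat (Vm n f j x)) = 0"
    using det_0_iff_vec_prod_zero[of "transpose_mat (Vm n f j x)" n] Vc by auto
  then show ?thesis using det_transpose[OF Vc] by simp
qed




definition Fof :: "nat \<Rightarrow> (nat \<Rightarrow> nat) \<Rightarrow> (nat \<times> nat) set" where
  "Fof n f = {(k, f k) | k. k < n \<and> f k \<noteq> k}"

lemma Fof_mem: "(x,y) \<in> Fof n f \<longleftrightarrow> x < n \<and> f x \<noteq> x \<and> y = f x"
  unfolding Fof_def by auto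

lemma froot_props:
  assumes "acyc n f" "\<forall>k<n. f k < n" "x < n"
  shows "reaches f x (froot f x)" "froot f x < n" "f (froot f x) = froot f x"
proof -
  obtain r where r: "reaches f x r" using assms unfolding acyc_def by auto
  then show "reaches f x (froot f x)" using froot_eq by simp
  then show "f (froot f x) = froot f x" unfolding reaches_def by simp
  obtain t where t: "(f^^t) x = froot f x" using \<open>reaches f x (froot f x)\<close> unfolding reaches_def by auto
  have "\<And>t. (f^^t) x < n"
  proof -
    fix t show "(f^^t) x < n" by (induction t) (use assms in auto)
  qed
  then show "froot f x < n" using t by metis
qed

lemma froot_step:
  assumes "acyc n f" "\<forall>k<n. f k < n" "x < n"
  shows "froot f (f x) = froot f x"
  using froot_props[OF assms] reaches_step froot_eq by blast

lemma froot_fix: "f r = r \<Longrightarrow> froot f r = r"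
  using reaches_fix froot_eq by blast

lemma path_fw:
  assumes ac: "acyc n f" and cl: "\<forall>k<n. f k < n"
    and C: "C = {y. y < n \<and> froot f y = \<rho>}" and A: "A = Fof n f \<inter> (C \<times> C)"
    and x: "x \<in> C"
  shows "(f^^t) x \<in> C \<and> (x, (f^^t) x) \<in> (A \<union> A\<inverse>)\<^sup>*"
proof (induction t)
  case 0 then show ?case using x by simp
next
  case (Suc t)
  let ?z = "(f^^t) x"
  have z: "?z < n" "froot f ?z = \<rho>" using Suc C by auto
  have fz: "f ?z \<in> C" using z froot_step[OF ac cl z(1)] cl C by auto
  have "(?z, f ?z) \<in> (A \<union> A\<inverse>)\<^sup>*"
  proof (cases "f ?z = ?z")
    case True then show ?thesis by simp
  next
    case False
    then have "(?z, f ?z) \<in> A" using A fz Suc z(1) by (auto simp: Fof_mem)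
    then show ?thesis by auto
  qed
  then show ?case using Suc fz by auto
qed

lemma root_inv:
  assumes ac: "acyc n f" and cl: "\<forall>k<n. f k < n"
  shows "(x,y) \<in> (Fof n f \<union> (Fof n f)\<inverse>)\<^sup>* \<Longrightarrow> x < n \<Longrightarrow> y < n \<and> froot f y = froot f x"
proof (induction rule: rtrancl_induct)
  case base then show ?case by simp
next
  case (step y z)
  then have y: "y < n" "froot f y = froot f x" by auto
  from step(2) show ?case
  proof
    assume "(y,z) \<in> Fof n f"
    then show ?thesis using y froot_step[OF ac cl y(1)] cl by (auto simp: Fof_mem)
  next
    assume "(y,z) \<in> (Fof n f)\<inverse>"
    then have "z < n" "y = f z" by (auto simp: Fof_mem)
    then show ?thesis using y froot_step[OF ac cl \<open>z < n\<close>] by auto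
  qed
qed

lemma conn_same_root:
  assumes ac: "acyc n f" and cl: "\<forall>k<n. f k < n"
    and C: "C = {y. y < n \<and> froot f y = \<rho>}" and A: "A = Fof n f \<inter> (C \<times> C)"
    and a: "a \<in> C" and b: "b \<in> C"
  shows "(a, b) \<in> (A \<union> A\<inverse>)\<^sup>*"
proof -
  have an: "a < n" "froot f a = \<rho>" using a C by auto
  have bn: "b < n" "froot f b = \<rho>" using b C by auto
  obtain ta where ta: "(f^^ta) a = \<rho>"
    using froot_props(1)[OF ac cl an(1)] an unfolding reaches_def by auto
  obtain tb where tb: "(f^^tb) b = \<rho>"
    using froot_props(1)[OF ac cl bn(1)] bn unfolding reaches_def by auto
  have 1: "(a, \<rho>) \<in> (A \<union> A\<inverse>)\<^sup>*" using path_fw[OF ac cl C A a, of ta] ta by simp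
  have "(b, \<rho>) \<in> (A \<union> A\<inverse>)\<^sup>*" using path_fw[OF ac cl C A b, of tb] tb by simp
  then have "(\<rho>, b) \<in> ((A \<union> A\<inverse>)\<inverse>)\<^sup>*" by (simp add: rtrancl_converseI)
  moreover have "(A \<union> A\<inverse>)\<inverse> = A \<union> A\<inverse>" by auto
  ultimately have "(\<rho>, b) \<in> (A \<union> A\<inverse>)\<^sup>*" by simp
  with 1 show ?thesis by (rule rtrancl_trans)
qed

lemma wrel_Fof:
  assumes ac: "acyc n f" and cl: "\<forall>k<n. f k < n"
  shows "(x,y) \<in> wrel n (Fof n f) \<longleftrightarrow> x < n \<and> y < n \<and> froot f x = froot f y"
proof
  assume "(x,y) \<in> wrel n (Fof n f)"
  then have h: "x < n" "y < n" "(x,y) \<in> (Fof n f \<union> (Fof n f)\<inverse>)\<^sup>*" unfolding wrel_def by auto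
  have "froot f y = froot f x" using root_inv[OF ac cl h(3) h(1)] by blast
  then show "x < n \<and> y < n \<and> froot f x = froot f y" using h by simp
next
  assume xy: "x < n \<and> y < n \<and> froot f x = froot f y"
  define C where "C = {z. z < n \<and> froot f z = froot f x}"
  define A where "A = Fof n f \<inter> (C \<times> C)"
  have xC: "x \<in> C" using xy C_def by simp
  have yC: "y \<in> C" using xy C_def by simp
  have "(x,y) \<in> (A \<union> A\<inverse>)\<^sup>*"
    by (rule conn_same_root[OF ac cl C_def A_def xC yC])
  moreover have "A \<union> A\<inverse> \<subseteq> Fof n f \<union> (Fof n f)\<inverse>" unfolding A_def by blast
  ultimately have "(x,y) \<in> (Fof n f \<union> (Fof n f)\<inverse>)\<^sup>*" using rtrancl_mono by blast
  then show "(x,y) \<in> wrel n (Fof n f)" unfolding wrel_def using xy by blast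
qed

lemma class_Fof:
  assumes ac: "acyc n f" and cl: "\<forall>k<n. f k < n" and x: "x < n"
  shows "wrel n (Fof n f) `` {x} = {y. y < n \<and> froot f y = froot f x}"
proof (intro equalityI subsetI)
  fix y assume "y \<in> wrel n (Fof n f) `` {x}"
  then have "(x,y) \<in> wrel n (Fof n f)" by blast
  then show "y \<in> {y. y < n \<and> froot f y = froot f x}" using wrel_Fof[OF ac cl, of x y] by simp
next
  fix y assume "y \<in> {y. y < n \<and> froot f y = froot f x}"
  then have "(x,y) \<in> wrel n (Fof n f)" using wrel_Fof[OF ac cl, of x y] x by simp
  then show "y \<in> wrel n (Fof n f) `` {x}" by blast
qed

lemma in_forest_Fof:
  assumes ac: "acyc n f" and cl: "\<forall>k<n. f k < n"
    and pos: "\<forall>k<n. f k \<noteq> k \<longrightarrow> w k (f k) > 0"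
  shows "in_forest n w (Fof n f)"
  unfolding in_forest_def
proof safe
  fix a b assume "(a,b) \<in> Fof n f"
  then show "(a,b) \<in> arcs n w" using pos cl unfolding arcs_def by (auto simp: Fof_mem)
next
  fix C assume "C \<in> {0..<n} // wrel n (Fof n f)"
  then obtain x where x: "x < n" and Cx: "C = wrel n (Fof n f) `` {x}"
    by (auto elim!: quotientE)
  define \<rho> where "\<rho> = froot f x"
  have C: "C = {y. y < n \<and> froot f y = \<rho>}" using class_Fof[OF ac cl x] Cx \<rho>_def by simp
  define A where "A = Fof n f \<inter> (C \<times> C)"
  have \<rho>C: "\<rho> \<in> C" using C froot_props[OF ac cl x] froot_fix \<rho>_def by auto
  have fr: "f \<rho> = \<rho>" using froot_props[OF ac cl x] \<rho>_def by simp
  show "converging_tree C (Fof n f \<inter> (C \<times> C))"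
    unfolding converging_tree_def A_def[symmetric]
  proof (intro conjI)
    show "A \<subseteq> C \<times> C" unfolding A_def by auto
    show "C \<noteq> {}" using \<rho>C by auto
    show "\<forall>a\<in>C. \<forall>b\<in>C. (a, b) \<in> (A \<union> A\<inverse>)\<^sup>*"
      using conn_same_root[OF ac cl C A_def] by blast
    show "\<exists>r\<in>C. outdeg A r = 0 \<and> (\<forall>v\<in>C. v \<noteq> r \<longrightarrow> outdeg A v = 1)"
    proof (intro bexI conjI ballI impI)
      show "outdeg A \<rho> = 0" unfolding outdeg_def A_def using fr by (auto simp: Fof_mem)
      fix v assume v: "v \<in> C" "v \<noteq> \<rho>"
      have vn: "v < n" "froot f v = \<rho>" using v C by auto
      have "f v \<noteq> v" using v vn froot_fix by metis
      moreover have "f v \<in> C" using C vn froot_step[OF ac cl vn(1)] cl by auto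
      ultimately have "{u. (v,u) \<in> A} = {f v}" unfolding A_def using v vn by (auto simp: Fof_mem)
      then show "outdeg A v = 1" unfolding outdeg_def by simp
    qed (rule \<rho>C)
  qed
qed

lemma num_trees_Fof:
  assumes ac: "acyc n f" and cl: "\<forall>k<n. f k < n"
  shows "num_trees n (Fof n f) = card {k. k < n \<and> f k = k}"
proof -
  let ?R = "wrel n (Fof n f)"
  let ?Fix = "{k. k < n \<and> f k = k}"
  have eq: "{0..<n} // ?R = (\<lambda>r. ?R `` {r}) ` ?Fix"
  proof
    show "{0..<n} // ?R \<subseteq> (\<lambda>r. ?R `` {r}) ` ?Fix"
    proof
      fix C assume "C \<in> {0..<n} // ?R"
      then obtain x where x: "x < n" and Cx: "C = ?R `` {x}" by (auto elim!: quotientE)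
      let ?r = "froot f x"
      have r: "?r < n" "f ?r = ?r" using froot_props[OF ac cl x] by auto
      have c1: "?R `` {x} = {y. y < n \<and> froot f y = ?r}" by (rule class_Fof[OF ac cl x])
      have c2: "?R `` {?r} = {y. y < n \<and> froot f y = froot f ?r}" by (rule class_Fof[OF ac cl r(1)])
      have "froot f ?r = ?r" using froot_fix[of f ?r] r(2) by blast
      then have "?R `` {?r} = C" using c1 c2 Cx by simp
      then show "C \<in> (\<lambda>r. ?R `` {r}) ` ?Fix" using r by force
    qed
  next
    show "(\<lambda>r. ?R `` {r}) ` ?Fix \<subseteq> {0..<n} // ?R"
      by (auto intro!: quotientI)
  qed
  have inj: "inj_on (\<lambda>r. ?R `` {r}) ?Fix"
  proof
    fix r1 r2 assume r: "r1 \<in> ?Fix" "r2 \<in> ?Fix" "?R `` {r1} = ?R `` {r2}"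
    then have "r1 \<in> ?R `` {r2}" using class_Fof[OF ac cl, of r1] froot_fix by auto
    then have "froot f r1 = froot f r2" using class_Fof[OF ac cl, of r2] r by auto
    then show "r1 = r2" using froot_fix[of f r1] froot_fix[of f r2] r by auto
  qed
  show ?thesis unfolding num_trees_def eq by (rule card_image[OF inj])
qed

lemma Fof_image: "Fof n f = (\<lambda>k. (k, f k)) ` {k. k < n \<and> f k \<noteq> k}"
  unfolding Fof_def by auto

lemma card_Fof: "card (Fof n f) = card {k. k < n \<and> f k \<noteq> k}"
  unfolding Fof_image by (rule card_image) (auto simp: inj_on_def)

lemma weight_Fof: "weight w (Fof n f) = (\<Prod>k\<in>{k. k < n \<and> f k \<noteq> k}. w k (f k))"
  unfolding weight_def Fof_image by (subst prod.reindex) (auto simp: inj_on_def)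


lemma wrel_equiv: "equiv {0..<n} (wrel n F)"
proof (rule equivI)
  show "refl_on {0..<n} (wrel n F)" unfolding refl_on_def wrel_def by auto
  show "sym (wrel n F)"
  proof (rule symI)
    fix a b assume "(a,b) \<in> wrel n F"
    then have h: "a < n" "b < n" "(a,b) \<in> (F \<union> F\<inverse>)\<^sup>*" unfolding wrel_def by auto
    then have "(b,a) \<in> ((F \<union> F\<inverse>)\<inverse>)\<^sup>*" by (simp add: rtrancl_converseI)
    moreover have "(F \<union> F\<inverse>)\<inverse> = F \<union> F\<inverse>" by auto
    ultimately show "(b,a) \<in> wrel n F" unfolding wrel_def using h by auto
  qed
  show "trans (wrel n F)"
  proof (rule transI)
    fix a b c assume "(a,b) \<in> wrel n F" "(b,c) \<in> wrel n F"
    then show "(a,c) \<in> wrel n F" unfolding wrel_def using rtrancl_trans by fastforce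
  qed
qed (auto simp: wrel_def)

lemma forest_to_f:
  assumes F: "in_forest n w F" and loops: "\<forall>k<n. w k k = 0"
  defines "g \<equiv> (\<lambda>k. if k < n then (if \<exists>u. (k,u) \<in> F then (SOME u. (k,u) \<in> F) else k) else undefined)"
  shows "(\<forall>k. k \<ge> n \<longrightarrow> g k = undefined) \<and> (\<forall>k<n. g k < n) \<and> acyc n g \<and> Fof n g = F \<and> (\<forall>k<n. g k \<noteq> k \<longrightarrow> w k (g k) > 0)
     \<and> (\<forall>k<n. outdeg F k = 0 \<longrightarrow> g k = k)"
proof -
  let ?R = "wrel n F"
  have Farcs: "F \<subseteq> arcs n w" using F unfolding in_forest_def by auto
  have Fn: "\<And>a b. (a,b) \<in> F \<Longrightarrow> a < n \<and> b < n \<and> w a b > 0" using Farcs unfolding arcs_def by auto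
  have eqv: "equiv {0..<n} ?R" by (rule wrel_equiv)
  have trees: "\<And>C. C \<in> {0..<n} // ?R \<Longrightarrow> converging_tree C (F \<inter> (C \<times> C))"
    using F unfolding in_forest_def by auto
  have Fin: "\<And>v. finite {u. (v,u) \<in> F}"
  proof -
    fix v have "{u. (v,u) \<in> F} \<subseteq> {0..<n}" using Fn by auto
    then show "finite {u. (v,u) \<in> F}" by (rule finite_subset) simp
  qed
  have stay: "\<And>x v u. x < n \<Longrightarrow> v \<in> ?R `` {x} \<Longrightarrow> (v,u) \<in> F \<Longrightarrow> u \<in> ?R `` {x}"
  proof -
    fix x v u assume x: "x < n" and v: "v \<in> ?R `` {x}" and vu: "(v,u) \<in> F"
    have "(v,u) \<in> ?R" using Fn[OF vu] vu unfolding wrel_def by auto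
    moreover have "(x,v) \<in> ?R" using v by simp
    ultimately have "(x,u) \<in> ?R" using eqv unfolding equiv_def trans_def by blast
    then show "u \<in> ?R `` {x}" by simp
  qed
  have selfC: "\<And>x. x < n \<Longrightarrow> x \<in> ?R `` {x}" unfolding wrel_def by auto
  have outA: "\<And>x v. x < n \<Longrightarrow> v \<in> ?R `` {x} \<Longrightarrow>
      {u. (v,u) \<in> F \<inter> (?R `` {x} \<times> ?R `` {x})} = {u. (v,u) \<in> F}"
    using stay by blast
  have func: "\<And>v u1 u2. (v,u1) \<in> F \<Longrightarrow> (v,u2) \<in> F \<Longrightarrow> u1 = u2"
  proof -
    fix v u1 u2 assume u: "(v,u1) \<in> F" "(v,u2) \<in> F"
    have vn: "v < n" using Fn u by auto
    let ?C = "?R `` {v}"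
    have "?C \<in> {0..<n} // ?R" using vn by (auto intro!: quotientI)
    then have ct: "converging_tree ?C (F \<inter> (?C \<times> ?C))" by (rule trees)
    then obtain r where r: "r \<in> ?C" "outdeg (F \<inter> (?C \<times> ?C)) r = 0"
      "\<forall>v'\<in>?C. v' \<noteq> r \<longrightarrow> outdeg (F \<inter> (?C \<times> ?C)) v' = 1"
      unfolding converging_tree_def by blast
    have "outdeg (F \<inter> (?C \<times> ?C)) v \<le> 1" using r selfC[OF vn] by (cases "v = r") auto
    then have "card {u. (v,u) \<in> F} \<le> 1" unfolding outdeg_def using outA[OF vn selfC[OF vn]] by simp
    then show "u1 = u2" using card_le_Suc0_iff_eq[OF Fin[of v]] u by auto
  qed
  have gF: "\<And>k u. (k,u) \<in> F \<Longrightarrow> g k = u"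
  proof -
    fix k u assume ku: "(k,u) \<in> F"
    then have "(k, SOME u. (k,u) \<in> F) \<in> F" by (rule someI)
    then show "g k = u" unfolding g_def using ku func Fn by auto
  qed
  have gnF: "\<And>k. k < n \<Longrightarrow> \<not> (\<exists>u. (k,u) \<in> F) \<Longrightarrow> g k = k" unfolding g_def by auto
  have cl: "\<forall>k<n. g k < n"
  proof (intro allI impI)
    fix k assume "k < n"
    show "g k < n"
    proof (cases "\<exists>u. (k,u) \<in> F")
      case True then obtain u where "(k,u) \<in> F" by auto
      then show ?thesis using gF Fn by auto
    next
      case False then show ?thesis using gnF \<open>k < n\<close> by auto
    qed
  qed
  have Fof_eq: "Fof n g = F"
  proof (intro equalityI subsetI)
    fix p assume "p \<in> Fof n g"
    then obtain k where p: "p = (k, g k)" "k < n" "g k \<noteq> k" unfolding Fof_def by auto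
    then have "\<exists>u. (k,u) \<in> F" using gnF by metis
    then obtain u where "(k,u) \<in> F" by auto
    then show "p \<in> F" using gF p by auto
  next
    fix p assume p: "p \<in> F"
    obtain k u where ku: "p = (k,u)" by (cases p)
    have "k < n" "w k u > 0" using Fn p ku by auto
    then have "u \<noteq> k" using loops by auto
    then show "p \<in> Fof n g" using gF p ku \<open>k < n\<close> unfolding Fof_def by auto
  qed
  have pos: "\<forall>k<n. g k \<noteq> k \<longrightarrow> w k (g k) > 0"
  proof (intro allI impI)
    fix k assume "k < n" "g k \<noteq> k"
    then have "(k, g k) \<in> F" using Fof_eq unfolding Fof_def by auto
    then show "w k (g k) > 0" using Fn by auto
  qed
  have od: "\<forall>k<n. outdeg F k = 0 \<longrightarrow> g k = k"
  proof (intro allI impI)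
    fix k assume "k < n" "outdeg F k = 0"
    then have "{u. (k,u) \<in> F} = {}" using Fin[of k] unfolding outdeg_def by simp
    then show "g k = k" using gnF \<open>k < n\<close> by auto
  qed
  have ac: "acyc n g" unfolding acyc_def
  proof (intro allI impI)
    fix x assume xn: "x < n"
    let ?C = "?R `` {x}"
    let ?A = "F \<inter> (?C \<times> ?C)"
    have "?C \<in> {0..<n} // ?R" using xn by (auto intro!: quotientI)
    then have ct: "converging_tree ?C ?A" by (rule trees)
    then obtain r where r: "r \<in> ?C" "outdeg ?A r = 0"
      unfolding converging_tree_def by blast
    have conn: "(r, x) \<in> (?A \<union> ?A\<inverse>)\<^sup>*" using ct r(1) selfC[OF xn] unfolding converging_tree_def by blast
    have noout: "\<And>u. (r,u) \<notin> F"
    proof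
      fix u assume "(r,u) \<in> F"
      then have "u \<in> {u. (r,u) \<in> ?A}" using outA[OF xn r(1)] by blast
      then have ne: "{u. (r,u) \<in> ?A} \<noteq> {}" by blast
      have fin: "finite {u. (r,u) \<in> ?A}" using Fin[of r] by (rule finite_subset[rotated]) auto
      have cz: "card {u. (r,u) \<in> ?A} = 0" using r(2) unfolding outdeg_def by assumption
      show False using card_0_eq[OF fin] cz ne by blast
    qed
    have "r < n" using r(1) unfolding wrel_def by auto
    then have gr: "g r = r" using gnF noout by auto
    have "\<And>b. (r,b) \<in> (?A \<union> ?A\<inverse>)\<^sup>* \<Longrightarrow> \<exists>t. (g^^t) b = r"
    proof -
      fix b assume "(r,b) \<in> (?A \<union> ?A\<inverse>)\<^sup>*"
      then show "\<exists>t. (g^^t) b = r"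
      proof (induction rule: rtrancl_induct)
        case base then show ?case by (metis funpow_0)
      next
        case (step b c)
        then obtain t where t: "(g^^t) b = r" by auto
        from step(2) show ?case
        proof
          assume bc: "(b,c) \<in> ?A"
          then have c: "c = g b" using gF by auto
          have "b \<noteq> r" using bc noout by auto
          then obtain s where "t = Suc s" using t by (cases t) auto
          then have "(g^^s) (g b) = r" using t by (simp add: funpow_Suc_right del: funpow.simps)
          then show ?thesis using c by blast
        next
          assume "(b,c) \<in> ?A\<inverse>"
          then have b: "b = g c" using gF by auto
          have "(g^^Suc t) c = r" using t b by (simp add: funpow_Suc_right del: funpow.simps)
          then show ?thesis by blast
        qed
      qed
    qed
    then obtain t where "(g^^t) x = r" using conn by blast
    then show "\<exists>r. reaches g x r" using gr unfolding reaches_def by blast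
  qed
  have und: "\<forall>k. k \<ge> n \<longrightarrow> g k = undefined" unfolding g_def by auto
  show ?thesis using und cl ac Fof_eq pos od by blast
qed


lemma cof_det:
  assumes M: "(M :: complex mat) \<in> carrier_mat n n" and i: "i < n" and j: "j < n"
  shows "cofactor M j i = det (mat n n (\<lambda>(k,c). if k = j then (if c = i then 1 else 0) else M $$ (k,c)))"
proof -
  define A where "A = mat n n (\<lambda>(k,c). if k = j then (if c = i then 1 else 0) else M $$ (k,c))"
  have A: "A \<in> carrier_mat n n" unfolding A_def by simp
  have "det A = (\<Sum>c<n. A $$ (j,c) * cofactor A j c)" by (rule laplace_expansion_row[OF A j])
  also have "\<dots> = (\<Sum>c<n. (if c = i then cofactor A j c else 0))"
    by (rule sum.cong) (auto simp: A_def j)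
  also have "\<dots> = cofactor A j i" using i by simp
  also have "mat_delete A j i = mat_delete M j i"
    by (rule eq_matI) (use M in \<open>auto simp: mat_delete_def A_def\<close>)
  then have "cofactor A j i = cofactor M j i" unfolding cofactor_def by simp
  finally show ?thesis unfolding A_def by simp
qed

lemma sum_rest:
  fixes g :: "nat \<Rightarrow> complex"
  assumes "c < n" "k < n"
  shows "(\<Sum>m\<in>{0..<n} - {k}. g m * ((if c = k then 1 else 0) - (if c = m then 1 else 0))) =
    (if c = k then (\<Sum>m\<in>{0..<n} - {k}. g m) else - g c)"
proof (cases "c = k")
  case True
  then show ?thesis by (auto intro!: sum.cong)
next
  case False
  have "(\<Sum>m\<in>{0..<n} - {k}. g m * ((if c = k then 1 else 0) - (if c = m then 1 else 0))) =
      (\<Sum>m\<in>{0..<n} - {k}. - (if m = c then g m else 0))"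
    using False by (intro sum.cong) auto
  also have "\<dots> = - g c" using False assms by (simp add: sum_negf)
  finally show ?thesis using False by simp
qed


lemma forest_to_f_ex:
  assumes F: "in_forest n w F" and loops: "\<forall>k<n. w k k = 0"
  shows "\<exists>g. (\<forall>k. k \<ge> n \<longrightarrow> g k = undefined) \<and> (\<forall>k<n. g k < n) \<and> acyc n g \<and> Fof n g = F \<and> (\<forall>k<n. g k \<noteq> k \<longrightarrow> w k (g k) > 0)
     \<and> (\<forall>k<n. outdeg F k = 0 \<longrightarrow> g k = k)"
  by (rule exI, rule forest_to_f[OF F loops])

lemma finite_arcs: "finite (arcs n w)"
proof -
  have "arcs n w \<subseteq> {0..<n} \<times> {0..<n}" unfolding arcs_def by auto
  then show ?thesis by (rule finite_subset) simp
qed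

lemma finite_forests: "finite {F. in_forest n w F \<and> P F}"
proof -
  have "{F. in_forest n w F \<and> P F} \<subseteq> Pow (arcs n w)" unfolding in_forest_def by auto
  then show ?thesis by (rule finite_subset) (simp add: finite_arcs)
qed

lemma card_forest_bound:
  assumes F: "in_forest n w F" and loops: "\<forall>k<n. w k k = 0"
  shows "card F \<le> n - in_forest_dim n w"
proof -
  from forest_to_f_ex[OF F loops] obtain g where
    gg: "(\<forall>k. k \<ge> n \<longrightarrow> g k = undefined) \<and> (\<forall>k<n. g k < n) \<and> acyc n g \<and> Fof n g = F \<and> (\<forall>k<n. g k \<noteq> k \<longrightarrow> w k (g k) > 0)
     \<and> (\<forall>k<n. outdeg F k = 0 \<longrightarrow> g k = k)" by (elim exE)
  have g: "\<forall>k<n. g k < n" "acyc n g" "Fof n g = F" using gg by simp_all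
  have e: "{0..<n} = {k. k < n \<and> g k \<noteq> k} \<union> {k. k < n \<and> g k = k}" by auto
  have "card ({k. k < n \<and> g k \<noteq> k} \<union> {k. k < n \<and> g k = k}) =
      card {k. k < n \<and> g k \<noteq> k} + card {k. k < n \<and> g k = k}"
    by (rule card_Un_disjoint) auto
  then have "card {0..<n} = card {k. k < n \<and> g k \<noteq> k} + card {k. k < n \<and> g k = k}"
    by (subst e)
  then have "n = card {k. k < n \<and> g k \<noteq> k} + card {k. k < n \<and> g k = k}" by simp
  moreover have "card F = card {k. k < n \<and> g k \<noteq> k}" using card_Fof[of n g] g(3) by simp
  moreover have "num_trees n F = card {k. k < n \<and> g k = k}" using num_trees_Fof[OF g(2) g(1)] g(3) by simp
  moreover have "in_forest_dim n w \<le> num_trees n F"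
  proof -
    have "{num_trees n F | F. in_forest n w F} = num_trees n ` {F. in_forest n w F \<and> True}" by auto
    moreover have "finite {F. in_forest n w F \<and> True}" by (rule finite_forests)
    ultimately have fin: "finite {num_trees n F | F. in_forest n w F}" by simp
    have "num_trees n F \<in> {num_trees n F | F. in_forest n w F}" using F by auto
    then show ?thesis unfolding in_forest_dim_def using Min_le[OF fin] by blast
  qed
  ultimately show ?thesis by linarith
qed

lemma sum_by_card:
  fixes lam :: complex and i j :: nat
  assumes loops: "\<forall>k<n. w k k = 0"
  defines "T \<equiv> {F. in_forest n w F \<and> ((i,j) \<in> wrel n F \<and> outdeg F j = 0)}"
  shows "(\<Sum>k = 0..n - in_forest_dim n w. of_real (Qent n w k i j) * lam ^ (n - k - 1)) =
    (\<Sum>F\<in>T. of_real (weight w F) * lam ^ (n - card F - 1))"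
proof -
  have finT: "finite T" unfolding T_def by (rule finite_forests)
  have "(\<Sum>k = 0..n - in_forest_dim n w. of_real (Qent n w k i j) * lam ^ (n - k - 1)) =
    (\<Sum>k = 0..n - in_forest_dim n w. (\<Sum>F\<in>{F. F \<in> T \<and> card F = k}. of_real (weight w F) * lam ^ (n - card F - 1)))"
  proof (rule sum.cong[OF refl])
    fix k
    have "{F. in_forest n w F \<and> card F = k \<and> (i,j) \<in> wrel n F \<and> outdeg F j = 0} = {F. F \<in> T \<and> card F = k}"
      unfolding T_def by auto
    then have "Qent n w k i j = (\<Sum>F\<in>{F. F \<in> T \<and> card F = k}. weight w F)" unfolding Qent_def by simp
    then have "of_real (Qent n w k i j) * lam ^ (n - k - 1) =
        (\<Sum>F\<in>{F. F \<in> T \<and> card F = k}. of_real (weight w F) * lam ^ (n - k - 1))"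
      by (simp add: sum_distrib_right)
    also have "\<dots> = (\<Sum>F\<in>{F. F \<in> T \<and> card F = k}. of_real (weight w F) * lam ^ (n - card F - 1))"
      by (rule sum.cong) auto
    finally show "of_real (Qent n w k i j) * lam ^ (n - k - 1) = \<dots>" .
  qed
  also have "\<dots> = (\<Sum>F\<in>T. of_real (weight w F) * lam ^ (n - card F - 1))"
  proof (rule sum.group[OF finT])
    show "finite {0..n - in_forest_dim n w}" by simp
    show "card ` T \<subseteq> {0..n - in_forest_dim n w}"
    proof (rule image_subsetI)
      fix F assume "F \<in> T"
      then have "in_forest n w F" unfolding T_def by simp
      then show "card F \<in> {0..n - in_forest_dim n w}" using card_forest_bound[of n w F] loops by simp
    qed
  qed
  finally show ?thesis .
qed


lemma adj_entry:
  fixes lam :: complex and i j :: nat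
  assumes loops: "\<forall>k<n. w k k = 0" and nonneg: "\<And>a b. a < n \<Longrightarrow> b < n \<Longrightarrow> w a b \<ge> 0"
    and i: "i < n" and j: "j < n"
  defines "M \<equiv> lam \<cdot>\<^sub>m 1\<^sub>m n + map_mat of_real (laplacian n w)"
  defines "T \<equiv> {F. in_forest n w F \<and> ((i,j) \<in> wrel n F \<and> outdeg F j = 0)}"
  shows "cofactor M j i = (\<Sum>F\<in>T. of_real (weight w F) * lam ^ (n - card F - 1))"
proof -
  define S where "S = (\<lambda>k. if k = j then {j} else {0..<n})"
  define a where "a = (\<lambda>k m. if k = j then 1 else if m = k then lam else complex_of_real (w k m))"
  define v where "v = (\<lambda>k m c. if k = j then (if c = i then 1 else 0) else
     (if c = k then 1 else 0) - (if m \<noteq> k \<and> c = m then 1 else (0::complex)))"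
  define P where "P = PiE {0..<n} S"
  define G where "G = {f \<in> P. acyc n f \<and> froot f i = j}"
  define G' where "G' = {f \<in> G. \<forall>k<n. f k \<noteq> k \<longrightarrow> w k (f k) > 0}"
  have Mc: "M \<in> carrier_mat n n" unfolding M_def by (simp add: laplacian_def)
  have finS: "\<And>k. finite (S k)" unfolding S_def by auto
  have finP: "finite P" unfolding P_def using finS by (simp add: finite_PiE)
  have finG: "finite G" unfolding G_def using finP by simp
  have Pprops: "\<And>f. f \<in> P \<Longrightarrow> f j = j \<and> (\<forall>k<n. f k < n)"
  proof -
    fix f assume "f \<in> P"
    then have "\<And>k. k < n \<Longrightarrow> f k \<in> S k" unfolding P_def by (auto simp: PiE_iff)
    then show "f j = j \<and> (\<forall>k<n. f k < n)" using j unfolding S_def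
      by (metis atLeastLessThan_iff singletonD)
  qed
  have "cofactor M j i = det (mat n n (\<lambda>(k,c). if k = j then (if c = i then 1 else 0) else M $$ (k,c)))"
    by (rule cof_det[OF Mc i j])
  also have "mat n n (\<lambda>(k,c). if k = j then (if c = i then 1 else 0) else M $$ (k,c)) =
      mat n n (\<lambda>(k,c). \<Sum>m\<in>S k. a k m * v k m c)"
  proof (rule eq_matI)
    fix k c assume "k < dim_row (mat n n (\<lambda>(k,c). \<Sum>m\<in>S k. a k m * v k m c))"
      "c < dim_col (mat n n (\<lambda>(k,c). \<Sum>m\<in>S k. a k m * v k m c))"
    then have k: "k < n" and c: "c < n" by auto
    show "mat n n (\<lambda>(k,c). if k = j then (if c = i then 1 else 0) else M $$ (k,c)) $$ (k,c) =
      mat n n (\<lambda>(k,c). \<Sum>m\<in>S k. a k m * v k m c) $$ (k,c)"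
    proof (cases "k = j")
      case True
      then show ?thesis using k c unfolding S_def a_def v_def by simp
    next
      case False
      have Mkc: "M $$ (k,c) = (if k = c then lam else 0) +
          of_real (if k = c then (\<Sum>m\<in>{0..<n} - {k}. w k m) else - w k c)"
        unfolding M_def laplacian_def using k c by simp
      have "(\<Sum>m\<in>S k. a k m * v k m c) = a k k * v k k c + (\<Sum>m\<in>{0..<n} - {k}. a k m * v k m c)"
        unfolding S_def using False k by (simp add: sum.remove)
      also have "(\<Sum>m\<in>{0..<n} - {k}. a k m * v k m c) =
          (\<Sum>m\<in>{0..<n} - {k}. of_real (w k m) * ((if c = k then 1 else 0) - (if c = m then 1 else 0)))"
        by (rule sum.cong) (use False in \<open>auto simp: a_def v_def\<close>)
      also have "\<dots> = (if c = k then (\<Sum>m\<in>{0..<n} - {k}. of_real (w k m)) else - of_real (w k c))"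
        by (rule sum_rest[OF c k])
      finally show ?thesis using False k c Mkc unfolding a_def v_def
        by (auto simp: of_real_sum)
    qed
  qed auto
  also have "det (mat n n (\<lambda>(k,c). \<Sum>m\<in>S k. a k m * v k m c)) =
      (\<Sum>f\<in>P. (\<Prod>k=0..<n. a k (f k)) * det (mat n n (\<lambda>(k,c). v k (f k) c)))"
    unfolding P_def by (rule det_expand[OF finS])
  also have "\<dots> = (\<Sum>f\<in>P. if acyc n f \<and> froot f i = j then (\<Prod>k=0..<n. a k (f k)) else 0)"
  proof (rule sum.cong[OF refl])
    fix f assume f: "f \<in> P"
    have Vm: "mat n n (\<lambda>(k,c). v k (f k) c) = Vm n f j i" unfolding Vm_def v_def by simp
    have fj: "f j = j" and cl: "\<forall>k<n. f k < n" using Pprops[OF f] by auto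
    show "(\<Prod>k=0..<n. a k (f k)) * det (mat n n (\<lambda>(k,c). v k (f k) c)) =
        (if acyc n f \<and> froot f i = j then (\<Prod>k=0..<n. a k (f k)) else 0)"
    proof (cases "acyc n f")
      case True
      then show ?thesis unfolding Vm using det_Vm_acyc[OF fj j i cl True] by simp
    next
      case False
      then show ?thesis unfolding Vm using det_Vm_cyc[OF fj cl False] by simp
    qed
  qed
  also have "\<dots> = (\<Sum>f\<in>G. \<Prod>k=0..<n. a k (f k))"
    unfolding G_def by (rule sum.inter_filter[symmetric, OF finP])
  also have "\<dots> = (\<Sum>f\<in>G'. \<Prod>k=0..<n. a k (f k))"
  proof (rule sum.mono_neutral_right[OF finG])
    show "G' \<subseteq> G" unfolding G'_def by auto
    show "\<forall>f\<in>G - G'. (\<Prod>k=0..<n. a k (f k)) = 0"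
    proof
      fix f assume f: "f \<in> G - G'"
      then obtain k where k: "k < n" "f k \<noteq> k" "\<not> w k (f k) > 0" unfolding G'_def by auto
      have fP: "f \<in> P" using f unfolding G_def by auto
      have "f k < n" "f j = j" using Pprops[OF fP] k by auto
      then have "w k (f k) = 0" "k \<noteq> j" using nonneg[OF k(1)] k by force+
      then have "a k (f k) = 0" unfolding a_def using k by simp
      then show "(\<Prod>k=0..<n. a k (f k)) = 0" using k by (intro prod_zero) auto
    qed
  qed
  also have "\<dots> = (\<Sum>f\<in>G'. of_real (weight w (Fof n f)) * lam ^ (n - card (Fof n f) - 1))"
  proof (rule sum.cong[OF refl])
    fix f assume f: "f \<in> G'"
    have fP: "f \<in> P" using f unfolding G'_def G_def by auto
    have fj: "f j = j" using Pprops[OF fP] by auto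
    define NF where "NF = {k. k < n \<and> f k \<noteq> k}"
    define Fx where "Fx = {k. k < n \<and> f k = k}"
    have e: "{0..<n} = NF \<union> Fx" unfolding NF_def Fx_def by auto
    have d: "NF \<inter> Fx = {}" unfolding NF_def Fx_def by auto
    have finNF: "finite NF" "finite Fx" unfolding NF_def Fx_def by auto
    have "card {0..<n} = card NF + card Fx"
      by (subst e) (rule card_Un_disjoint[OF finNF d])
    then have cardn: "card NF + card Fx = n" by simp
    have jFx: "j \<in> Fx" unfolding Fx_def using fj j by simp
    have "(\<Prod>k=0..<n. a k (f k)) = (\<Prod>k\<in>NF. a k (f k)) * (\<Prod>k\<in>Fx. a k (f k))"
      unfolding e by (rule prod.union_disjoint[OF finNF d])
    also have "(\<Prod>k\<in>NF. a k (f k)) = (\<Prod>k\<in>NF. of_real (w k (f k)))"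
      by (rule prod.cong) (use fj in \<open>auto simp: a_def NF_def\<close>)
    also have "\<dots> = of_real (weight w (Fof n f))"
      unfolding weight_Fof NF_def by (simp add: of_real_prod)
    also have "(\<Prod>k\<in>Fx. a k (f k)) = a j (f j) * (\<Prod>k\<in>Fx - {j}. a k (f k))"
      by (rule prod.remove[OF finNF(2) jFx])
    also have "(\<Prod>k\<in>Fx - {j}. a k (f k)) = (\<Prod>k\<in>Fx - {j}. lam)"
      by (rule prod.cong) (auto simp: a_def Fx_def)
    also have "\<dots> = lam ^ (card Fx - 1)" using jFx finNF by simp
    also have "card Fx - 1 = n - card (Fof n f) - 1" using cardn card_Fof[of n f] unfolding NF_def by simp
    finally show "(\<Prod>k=0..<n. a k (f k)) = of_real (weight w (Fof n f)) * lam ^ (n - card (Fof n f) - 1)"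
      using fj unfolding a_def by simp
  qed
  also have "\<dots> = (\<Sum>F\<in>T. of_real (weight w F) * lam ^ (n - card F - 1))"
  proof (rule sum.reindex_bij_betw)
    show "bij_betw (Fof n) G' T"
    proof (rule bij_betw_imageI)
      show "inj_on (Fof n) G'"
      proof
        fix f1 f2 assume f: "f1 \<in> G'" "f2 \<in> G'" and eq: "Fof n f1 = Fof n f2"
        have P: "f1 \<in> P" "f2 \<in> P" using f unfolding G'_def G_def by auto
        show "f1 = f2"
        proof (rule PiE_ext[OF P[unfolded P_def]])
          fix k assume "k \<in> {0..<n}"
          then have k: "k < n" by simp
          show "f1 k = f2 k"
          proof (cases "f1 k = k")
            case True
            show ?thesis
            proof (rule ccontr)
              assume "f1 k \<noteq> f2 k"
              then have "(k, f2 k) \<in> Fof n f2" using True k by (auto simp: Fof_mem)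
              then have "(k, f2 k) \<in> Fof n f1" using eq by simp
              then show False using True by (simp add: Fof_mem)
            qed
          next
            case False
            then have "(k, f1 k) \<in> Fof n f1" using k by (auto simp: Fof_mem)
            then show ?thesis using eq by (auto simp: Fof_mem)
          qed
        qed
      qed
      show "Fof n ` G' = T"
      proof (intro equalityI subsetI)
        fix F assume "F \<in> Fof n ` G'"
        then obtain f where f: "f \<in> G'" and F: "F = Fof n f" by auto
        have fP: "f \<in> P" and ac: "acyc n f" and fr: "froot f i = j"
          and pos: "\<forall>k<n. f k \<noteq> k \<longrightarrow> w k (f k) > 0"
          using f unfolding G'_def G_def by auto
        have fj: "f j = j" and cl: "\<forall>k<n. f k < n" using Pprops[OF fP] by auto
        have "in_forest n w F" unfolding F by (rule in_forest_Fof[where n=n and f=f and w=w, OF ac cl pos])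
        moreover have "(i,j) \<in> wrel n F" unfolding F wrel_Fof[OF ac cl]
          using i j fr froot_fix[of f j] fj by simp
        moreover have "outdeg F j = 0" unfolding F outdeg_def using fj by (simp add: Fof_mem)
        ultimately show "F \<in> T" unfolding T_def by simp
      next
        fix F assume "F \<in> T"
        then have F: "in_forest n w F" and ij: "(i,j) \<in> wrel n F" and od: "outdeg F j = 0"
          unfolding T_def by auto
        from forest_to_f_ex[OF F loops] obtain g where
          gg: "(\<forall>k. k \<ge> n \<longrightarrow> g k = undefined) \<and> (\<forall>k<n. g k < n) \<and> acyc n g \<and> Fof n g = F \<and> (\<forall>k<n. g k \<noteq> k \<longrightarrow> w k (g k) > 0)
           \<and> (\<forall>k<n. outdeg F k = 0 \<longrightarrow> g k = k)" by (elim exE)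
        have gu: "\<forall>k. k \<ge> n \<longrightarrow> g k = undefined" and cl: "\<forall>k<n. g k < n" and ac: "acyc n g"
          and gF: "Fof n g = F" and pos: "\<forall>k<n. g k \<noteq> k \<longrightarrow> w k (g k) > 0"
          and gz: "\<forall>k<n. outdeg F k = 0 \<longrightarrow> g k = k" using gg by simp_all
        have gj: "g j = j" using gz od j by simp
        have gP: "g \<in> P" unfolding P_def S_def
          using gu cl gj by (auto simp: PiE_iff extensional_def)
        have "froot g i = froot g j" using ij unfolding gF[symmetric] wrel_Fof[OF ac cl] by simp
        then have "froot g i = j" using froot_fix[of g j] gj by simp
        then have "g \<in> G'" unfolding G'_def G_def using gP ac pos by simp
        then show "F \<in> Fof n ` G'" using gF by blast
      qed
    qed
  qed
  finally show ?thesis .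
qed

theorem proposition3:
  fixes n :: nat and w :: "nat \<Rightarrow> nat \<Rightarrow> real" and lam :: complex
  assumes "n > 1"
    and "\<And>i. i < n \<Longrightarrow> w i i = 0"
    and "\<And>i j. i < n \<Longrightarrow> j < n \<Longrightarrow> w i j \<ge> 0"
  shows "adj_mat (lam \<cdot>\<^sub>m 1\<^sub>m n + map_mat of_real (laplacian n w)) =
    mat n n (\<lambda>(i,j). \<Sum>k = 0..n - in_forest_dim n w.
       of_real (Qmat n w k $$ (i,j)) * lam ^ (n - k - 1))"
proof -
  let ?M = "lam \<cdot>\<^sub>m 1\<^sub>m n + map_mat of_real (laplacian n w)"
  have loops: "\<forall>k<n. w k k = 0" using assms(2) by simp
  have Mc: "?M \<in> carrier_mat n n" by (simp add: laplacian_def)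
  show ?thesis
  proof (rule eq_matI)
    fix i j assume "i < dim_row (mat n n (\<lambda>(i,j). \<Sum>k = 0..n - in_forest_dim n w.
       of_real (Qmat n w k $$ (i,j)) * lam ^ (n - k - 1)))"
      "j < dim_col (mat n n (\<lambda>(i,j). \<Sum>k = 0..n - in_forest_dim n w.
       of_real (Qmat n w k $$ (i,j)) * lam ^ (n - k - 1)))"
    then have i: "i < n" and j: "j < n" by auto
    have "adj_mat ?M $$ (i,j) = cofactor ?M j i" unfolding adj_mat_def using Mc i j by (simp add: laplacian_def)
    also have "\<dots> = (\<Sum>F\<in>{F. in_forest n w F \<and> ((i,j) \<in> wrel n F \<and> outdeg F j = 0)}.
        of_real (weight w F) * lam ^ (n - card F - 1))"
      by (rule adj_entry[where n=n and w=w and lam=lam, OF loops assms(3) i j])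
    also have "\<dots> = (\<Sum>k = 0..n - in_forest_dim n w. of_real (Qent n w k i j) * lam ^ (n - k - 1))"
      by (rule sum_by_card[where n=n and w=w and lam=lam and i=i and j=j, OF loops, symmetric])
    also have "\<dots> = (\<Sum>k = 0..n - in_forest_dim n w. of_real (Qmat n w k $$ (i,j)) * lam ^ (n - k - 1))"
      unfolding Qmat_def using i j by simp
    finally show "adj_mat ?M $$ (i,j) = mat n n (\<lambda>(i,j). \<Sum>k = 0..n - in_forest_dim n w.
       of_real (Qmat n w k $$ (i,j)) * lam ^ (n - k - 1)) $$ (i,j)" using i j by simp
  qed (use Mc in \<open>auto simp: adj_mat_def\<close>)
qed


end
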